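(* For any integer $k\ge0$, code-tuple $F$, $i\in[F]$ and $\pmb{b}\in\mathcal{C}^{\ast}$: (i) $\mathcal{P}^k_{F,i}(\pmb{b})=\bar{\mathcal{P}}^k_{F,i}(\pmb{b})\cup\bigcup_{s\in\mathcal{S}_{F,i}(\pmb{b})}\mathcal{P}^k_{F,\tau_i(s)}$; (ii) if $F$ is $k$-bit delay decodable, then $|\mathcal{P}^k_{F,i}(\pmb{b})|=|\bar{\mathcal{P}}^k_{F,i}(\pmb{b})|+\sum_{s\in\mathcal{S}_{F,i}(\pmb{b})}|\mathcal{P}^k_{F,\tau_i(s)}|$; (iii) if $k\ge1$, then $\bar{\mathcal{P}}^k_{F,i}(\pmb{b})=0\mathcal{P}^{k-1}_{F,i}(\pmb{b}0)\cup 1\mathcal{P}^{k-1}_{F,i}(\pmb{b}1)$.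
   Context: $\mathcal{S}$ is a finite source alphabet with $|\mathcal{S}|\ge 2$ and $\mathcal{C}=\{0,1\}$. $\mathcal{A}^k,\mathcal{A}^{\ast},\mathcal{A}^{+}$ are the sequences over $\mathcal{A}$ of length $k$, finite length, finite positive length; $\lambda$ is the empty sequence. $\pmb{x}\preceq\pmb{y}$: $\pmb{x}$ is a prefix of $\pmb{y}$; $\pmb{x}\prec\pmb{y}$: proper prefix. For nonempty $\pmb{x}=x_1\cdots x_n$, $\mathrm{suff}(\pmb{x})=x_2\cdots x_n$. For $c\in\mathcal{C}$ and $\mathcal{A}\subseteq\mathcal{C}^{\ast}$, $c\mathcal{A}=\{c\pmb{a}:\pmb{a}\in\mathcal{A}\}$. A code-tuple $F$ with $m\ge1$ code tables is a tuple of maps $f_0,\dots,f_{m-1}:\mathcal{S}\to\mathcal{C}^{\ast}$ and $\tau_0,\dots,\tau_{m-1}:\mathcal{S}\to\{0,\dots,m-1\}$; $[F]=\{0,\dots,m-1\}$. Define $f_i^{\ast}(\lambda)=\lambda$ and $f_i^{\ast}(\pmb{x})=f_i(x_1)f^{\ast}_{\tau_i(x_1)}(\mathrm{suff}(\pmb{x}))$ for $\pmb{x}=x_1\cdots x_n\ne\lambda$. $\mathcal{S}_{F,i}(\pmb{b})=\{s:f_i(s)=\pmb{b}\}$. For integer $k\ge0$, $\mathcal{P}^k_{F,i}(\pmb{b})$ is the set of $\pmb{c}\in\mathcal{C}^k$ such that some $\pmb{x}=x_1\cdots x_n\in\mathcal{S}^{+}$ satisfies $f_i^{\ast}(\pmb{x})\succeq\pmb{b}\pmb{c}$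 and $f_i(x_1)\succeq\pmb{b}$; $\bar{\mathcal{P}}^k_{F,i}(\pmb{b})$ is the same with $f_i(x_1)\succ\pmb{b}$; $\mathcal{P}^k_{F,i}=\mathcal{P}^k_{F,i}(\lambda)$. $F$ is $k$-bit delay decodable if (i) $\mathcal{P}^k_{F,\tau_i(s)}\cap\bar{\mathcal{P}}^k_{F,i}(f_i(s))=\emptyset$ for all $i\in[F]$, $s\in\mathcal{S}$, and (ii) $\mathcal{P}^k_{F,\tau_i(s)}\cap\mathcal{P}^k_{F,\tau_i(s')}=\emptyset$ whenever $s\ne s'$ and $f_i(s)=f_i(s')$. *)

theory Defs
  imports Main "HOL-Library.Sublist"
begin

text \<open>Coding alphabet C = {0,1} is rendered as bool, with False = 0 and True = 1.
  A code-tuple with m code tables over source alphabet 's is a record of the number m of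
  tables, the maps f_i and the maps tau_i (indexed by i :: nat).\<close>

record 's code_tuple =
  ntab :: nat
  fmap :: "nat \<Rightarrow> 's \<Rightarrow> bool list"
  tmap :: "nat \<Rightarrow> 's \<Rightarrow> nat"

definition code_tuple :: "'s code_tuple \<Rightarrow> bool" where
  "code_tuple F \<longleftrightarrow> ntab F \<ge> 1 \<and> (\<forall>i<ntab F. \<forall>s. tmap F i s < ntab F)"

definition idx :: "'s code_tuple \<Rightarrow> nat set" where
  "idx F = {0..<ntab F}"

fun fstar :: "'s code_tuple \<Rightarrow> nat \<Rightarrow> 's list \<Rightarrow> bool list" where
  "fstar F i [] = []"
| "fstar F i (x # xs) = fmap F i x @ fstar F (tmap F i x) xs"

definition Sset :: "'s code_tuple \<Rightarrow> nat \<Rightarrow> bool list \<Rightarrow> 's set" where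
  "Sset F i b = {s. fmap F i s = b}"

definition Pset :: "nat \<Rightarrow> 's code_tuple \<Rightarrow> nat \<Rightarrow> bool list \<Rightarrow> bool list set" where
  "Pset k F i b = {c. length c = k \<and> (\<exists>x. x \<noteq> [] \<and> prefix (b @ c) (fstar F i x)
                                     \<and> prefix b (fmap F i (hd x)))}"

definition Pbar :: "nat \<Rightarrow> 's code_tuple \<Rightarrow> nat \<Rightarrow> bool list \<Rightarrow> bool list set" where
  "Pbar k F i b = {c. length c = k \<and> (\<exists>x. x \<noteq> [] \<and> prefix (b @ c) (fstar F i x)
                                     \<and> strict_prefix b (fmap F i (hd x)))}"

abbreviation P0 :: "nat \<Rightarrow> 's code_tuple \<Rightarrow> nat \<Rightarrow> bool list set" where
  "P0 k F i \<equiv> Pset k F i []"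

definition k_bit_delay_decodable :: "nat \<Rightarrow> 's code_tuple \<Rightarrow> bool" where
  "k_bit_delay_decodable k F \<longleftrightarrow>
     (\<forall>i\<in>idx F. \<forall>s. P0 k F (tmap F i s) \<inter> Pbar k F i (fmap F i s) = {}) \<and>
     (\<forall>i\<in>idx F. \<forall>s s'. s \<noteq> s' \<and> fmap F i s = fmap F i s' \<longrightarrow>
        P0 k F (tmap F i s) \<inter> P0 k F (tmap F i s') = {})"

end

theory Submission
  imports Defs
begin

lemma fin_len: "finite {c :: bool list. length c = k}"
proof -
  have "{c :: bool list. length c = k} = {c. set c \<subseteq> UNIV \<and> length c = k}" by auto
  thus ?thesis using finite_lists_length_eq[of "UNIV :: bool set" k] by simp
qed

lemma fin_P: "finite (Pset k F i b)"
  by (rule finite_subset[OF _ fin_len[of k]]) (auto simp: Pset_def)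

lemma fin_Pb: "finite (Pbar k F i b)"
  by (rule finite_subset[OF _ fin_len[of k]]) (auto simp: Pbar_def)

lemma part1: "Pset k F i b = Pbar k F i b \<union> (\<Union>s\<in>Sset F i b. P0 k F (tmap F i s))"
proof (intro equalityI subsetI)
  fix c assume "c \<in> Pset k F i b"
  then obtain x where len: "length c = k" and nx: "x \<noteq> []"
    and pre: "prefix (b@c) (fstar F i x)" and pb: "prefix b (fmap F i (hd x))"
    by (auto simp: Pset_def)
  obtain y ys where x: "x = y # ys" using nx by (cases x) auto
  show "c \<in> Pbar k F i b \<union> (\<Union>s\<in>Sset F i b. P0 k F (tmap F i s))"
  proof (cases "fmap F i y = b")
    case True
    have pc: "prefix c (fstar F (tmap F i y) ys)" using pre True x by simp
    define z where "z = (if ys = [] then [y] else ys)"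
    have "z \<noteq> []" "prefix c (fstar F (tmap F i y) z)"
      using pc by (auto simp: z_def)
    hence "c \<in> P0 k F (tmap F i y)" using len unfolding Pset_def by auto
    moreover have "y \<in> Sset F i b" using True by (simp add: Sset_def)
    ultimately show ?thesis by blast
  next
    case False
    hence "strict_prefix b (fmap F i (hd x))" using pb x by (simp add: strict_prefix_def)
    hence "c \<in> Pbar k F i b" using len nx pre unfolding Pbar_def by auto
    thus ?thesis by blast
  qed
next
  fix c assume "c \<in> Pbar k F i b \<union> (\<Union>s\<in>Sset F i b. P0 k F (tmap F i s))"
  then show "c \<in> Pset k F i b"
  proof
    assume "c \<in> Pbar k F i b" thus ?thesis
      unfolding Pbar_def Pset_def by (auto simp: strict_prefix_def)
  next
    assume "c \<in> (\<Union>s\<in>Sset F i b. P0 k F (tmap F i s))"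
    then obtain s x where s: "fmap F i s = b" and len: "length c = k" and nx: "x \<noteq> []"
      and pre: "prefix c (fstar F (tmap F i s) x)"
      by (auto simp: Sset_def Pset_def)
    have "s # x \<noteq> []" "prefix (b @ c) (fstar F i (s # x))" "prefix b (fmap F i (hd (s # x)))"
      using pre s by auto
    thus ?thesis using len unfolding Pset_def by blast
  qed
qed

lemma part2:
  fixes F :: "'s::finite code_tuple"
  assumes "k_bit_delay_decodable k F" and "i \<in> idx F"
  shows "card (Pset k F i b) = card (Pbar k F i b) + (\<Sum>s\<in>Sset F i b. card (P0 k F (tmap F i s)))"
proof -
  have d1: "\<And>s. s \<in> Sset F i b \<Longrightarrow> P0 k F (tmap F i s) \<inter> Pbar k F i b = {}"
    using assms unfolding k_bit_delay_decodable_def Sset_def by auto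
  have d2: "\<And>s s'. s \<in> Sset F i b \<Longrightarrow> s' \<in> Sset F i b \<Longrightarrow> s \<noteq> s' \<Longrightarrow>
      P0 k F (tmap F i s) \<inter> P0 k F (tmap F i s') = {}"
    using assms unfolding k_bit_delay_decodable_def Sset_def by auto
  have fS: "finite (Sset F i b)" by simp
  have "card (\<Union>s\<in>Sset F i b. P0 k F (tmap F i s)) = (\<Sum>s\<in>Sset F i b. card (P0 k F (tmap F i s)))"
    by (rule card_UN_disjoint[OF fS]) (auto simp: fin_P d2)
  moreover have "card (Pbar k F i b \<union> (\<Union>s\<in>Sset F i b. P0 k F (tmap F i s)))
      = card (Pbar k F i b) + card (\<Union>s\<in>Sset F i b. P0 k F (tmap F i s))"
    by (rule card_Un_disjoint) (use d1 fS fin_P fin_Pb in auto)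
  ultimately show ?thesis using part1 by metis
qed

lemma part3:
  assumes "k \<ge> 1"
  shows "Pbar k F i b = (Cons False) ` Pset (k - 1) F i (b @ [False])
                        \<union> (Cons True) ` Pset (k - 1) F i (b @ [True])"
proof (intro equalityI subsetI)
  fix c assume "c \<in> Pbar k F i b"
  then obtain x where len: "length c = k" and nx: "x \<noteq> []"
    and pre: "prefix (b@c) (fstar F i x)" and pb: "strict_prefix b (fmap F i (hd x))"
    by (auto simp: Pbar_def)
  obtain d c' where c: "c = d # c'" using len assms by (cases c) auto
  obtain y ys where x: "x = y # ys" using nx by (cases x) auto
  have "strict_prefix b (fmap F i y)" using pb x by simp
  then obtain e r where fy: "fmap F i y = b @ e # r" by (rule strict_prefixE')
  have "prefix (b @ d # c') (b @ e # r @ fstar F (tmap F i y) ys)" using pre c x fy by simp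
  hence "d = e" by simp
  hence "prefix (b @ [d]) (fmap F i (hd x))" using fy x by simp
  moreover have "prefix ((b @ [d]) @ c') (fstar F i x)" using pre c by simp
  ultimately have "c' \<in> Pset (k - 1) F i (b @ [d])" using len c nx unfolding Pset_def by auto
  thus "c \<in> (Cons False) ` Pset (k - 1) F i (b @ [False])
                        \<union> (Cons True) ` Pset (k - 1) F i (b @ [True])"
    unfolding c by (cases d) (simp_all add: image_iff)
next
  fix c assume "c \<in> (Cons False) ` Pset (k - 1) F i (b @ [False])
                        \<union> (Cons True) ` Pset (k - 1) F i (b @ [True])"
  then obtain d c' where c: "c = d # c'" and "c' \<in> Pset (k - 1) F i (b @ [d])"
    by (elim UnE imageE) blast+
  then obtain x where len: "length c' = k - 1" and nx: "x \<noteq> []"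
    and pre: "prefix ((b @ [d]) @ c') (fstar F i x)" and pb: "prefix (b @ [d]) (fmap F i (hd x))"
    by (auto simp: Pset_def)
  have "strict_prefix b (fmap F i (hd x))"
  proof -
    obtain t where "fmap F i (hd x) = b @ d # t" using pb by (auto elim: prefixE)
    thus ?thesis by (simp add: strict_prefix_def)
  qed
  moreover have "prefix (b @ c) (fstar F i x)" using pre c by simp
  moreover have "length c = k" using len c assms by simp
  ultimately show "c \<in> Pbar k F i b" using nx unfolding Pbar_def by auto
qed

theorem lemma3:
  fixes F :: "'a::finite code_tuple" and k i :: nat and b :: "bool list"
  assumes "card (UNIV :: 'a set) \<ge> 2" and "code_tuple F" and "i \<in> idx F"
  shows "(Pset k F i b = Pbar k F i b \<union> (\<Union>s\<in>Sset F i b. P0 k F (tmap F i s)))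
       \<and> (k_bit_delay_decodable k F \<longrightarrow>
           card (Pset k F i b) = card (Pbar k F i b) + (\<Sum>s\<in>Sset F i b. card (P0 k F (tmap F i s))))
       \<and> (k \<ge> 1 \<longrightarrow>
           Pbar k F i b = (Cons False) ` Pset (k - 1) F i (b @ [False])
                        \<union> (Cons True) ` Pset (k - 1) F i (b @ [True]))"
proof (intro conjI impI)
  show "Pset k F i b = Pbar k F i b \<union> (\<Union>s\<in>Sset F i b. P0 k F (tmap F i s))"
    by (rule part1)
next
  assume "k_bit_delay_decodable k F"
  thus "card (Pset k F i b) = card (Pbar k F i b) + (\<Sum>s\<in>Sset F i b. card (P0 k F (tmap F i s)))"
    by (rule part2[OF _ assms(3)])
next
  assume "k \<ge> 1"
  thus "Pbar k F i b = (Cons False) ` Pset (k - 1) F i (b @ [False])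
                        \<union> (Cons True) ` Pset (k - 1) F i (b @ [True])"
    by (rule part3)
qed

end
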